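(* Let $n\ge2$ be an integer, $j$ a positive integer, $\lambda\in\mathbb{R}$ with $\lambda\ge\frac{(n-1)j}{2}$, $\alpha=1-\frac1n$, $\beta=\frac12(1-\frac1n)-\frac{\lambda}{jn}$, and assume $\alpha-\beta-1\le1$. Let $\mathcal{G}(z)=e^{jz^n/2}\mathcal{M}(\beta,\alpha,-jz^n)$ and $\mathcal{D}(z)=e^{jz^n/2}\mathcal{T}(\beta,\alpha,-jz^n)$. There is $C_n>0$ depending only on $n$ such that for all such $j,\lambda$ and all $z\ge1$, $$C_n^{-1}e^{-\frac{jz^n}{2}}(jz^n)^{\beta-\alpha}\le\mathcal{D}(z)\le C_ne^{-\frac{jz^n}{2}}(jz^n)^{\beta-\alpha},\qquad C_n^{-1}e^{\frac{jz^n}{2}}(jz^n)^{-\beta}\le\mathcal{G}(z)\le C_ne^{\frac{jz^n}{2}}(jz^n)^{-\beta}.$$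
   Context: $(x)_k=\prod_{m=1}^k(x+m-1)$, $(x)_0=1$. $\mathcal{M}(\beta,\alpha,y)=\sum_{k\ge0}\frac{(\beta)_k}{(\alpha)_k}\frac{y^k}{k!}$. For $y<0$, $\mathcal{T}(\beta,\alpha,y)=\frac{e^y}{\Gamma(\alpha-\beta)}\int_0^\infty e^{yt}t^{\alpha-\beta-1}(1+t)^{\beta-1}dt$. *)

theory Defs
  imports "HOL-Analysis.Analysis"
begin

definition kummerM :: "real \<Rightarrow> real \<Rightarrow> real \<Rightarrow> real" where
  "kummerM \<beta> \<alpha> y = (\<Sum>k. pochhammer \<beta> k / pochhammer \<alpha> k * y ^ k / fact k)"

text \<open>The function T(beta, alpha, y), given by the integral formula (intended for y < 0).\<close>
definition kummerT :: "real \<Rightarrow> real \<Rightarrow> real \<Rightarrow> real" where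
  "kummerT \<beta> \<alpha> y = exp y / Gamma (\<alpha> - \<beta>) *
     (LBINT t:{0<..}. exp (y * t) * t powr (\<alpha> - \<beta> - 1) * (1 + t) powr (\<beta> - 1))"

end

theory Submission
  imports Defs "HOL-Computational_Algebra.Formal_Power_Series"
begin

lemma lint_from_has_integral:
  fixes f :: "real \<Rightarrow> real"
  assumes m: "f \<in> borel_measurable borel" and nn: "\<And>x. 0 \<le> f x"
    and I: "(f has_integral I) UNIV"
  shows "integrable lborel f" "integral\<^sup>L lborel f = I"
proof -
  have nn_eq: "integral\<^sup>N lborel f = ennreal I"
    using nn_integral_has_integral_lborel[OF m nn I] by simp
  have I0: "0 \<le> I" using I by (rule has_integral_nonneg) (simp add: nn)
  show int: "integrable lborel f"
    by (rule integrableI_nonneg) (use m nn nn_eq in auto)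
  show "integral\<^sup>L lborel f = I"
    using integral_lborel[OF int] I by (simp add: integral_unique)
qed

lemma gamma_lint:
  fixes a :: real assumes a: "a > 0"
  shows "integrable lborel (\<lambda>t. indicator {0<..} t * (t powr (a - 1) / exp t))"
        "integral\<^sup>L lborel (\<lambda>t. indicator {0<..} t * (t powr (a - 1) / exp t)) = Gamma a"
proof -
  have h0: "((\<lambda>t. t powr (a - 1) / exp t) has_integral Gamma a) {0..}"
    by (rule Gamma_integral_real[OF a])
  have "((\<lambda>t. if t \<in> {0<..} then t powr (a - 1) / exp t else 0) has_integral Gamma a) {0..}"
    by (rule has_integral_spike [of "{0}", rotated 2, OF h0]) auto
  hence h1: "((\<lambda>t. t powr (a - 1) / exp t) has_integral Gamma a) {0<..}"
    by (subst (asm) has_integral_restrict) auto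
  have h2: "((\<lambda>t. indicator {0<..} t * (t powr (a - 1) / exp t)) has_integral Gamma a) UNIV"
  proof -
    have "((\<lambda>x. if x \<in> {0<..} then x powr (a - 1) / exp x else 0) has_integral Gamma a) UNIV"
      using h1 by (simp only: has_integral_restrict_UNIV)
    thus ?thesis by (rule has_integral_eq[rotated]) (simp add: indicator_def)
  qed
  have m: "(\<lambda>t. indicator {0<..} t * (t powr (a - 1) / exp t)) \<in> borel_measurable borel"
    by measurable
  have nn: "\<And>t. 0 \<le> indicator {0<..} t * (t powr (a - 1) / exp t)"
    by (auto simp: indicator_def)
  show "integrable lborel (\<lambda>t. indicator {0<..} t * (t powr (a - 1) / exp t))"
       "integral\<^sup>L lborel (\<lambda>t. indicator {0<..} t * (t powr (a - 1) / exp t)) = Gamma a"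
    using lint_from_has_integral[OF m nn h2] by auto
qed

lemma gamma_scaled:
  fixes a w :: real assumes a: "a > 0" and w: "w > 0"
  shows "integrable lborel (\<lambda>t. indicator {0<..} t * (exp (- (w * t)) * t powr (a - 1)))"
        "integral\<^sup>L lborel (\<lambda>t. indicator {0<..} t * (exp (- (w * t)) * t powr (a - 1))) = Gamma a * w powr (- a)"
proof -
  define g where "g = (\<lambda>t. indicator {0<..} t * (t powr (a - 1) / exp t))"
  have eq: "g (w * t) = w powr (a - 1) * (indicator {0<..} t * (exp (- (w * t)) * t powr (a - 1)))" for t
    using w by (auto simp: g_def indicator_def powr_mult exp_minus field_simps zero_less_mult_iff)
  have gi: "integrable lborel g" and gI: "integral\<^sup>L lborel g = Gamma a"
    using gamma_lint[OF a] by (simp_all add: g_def)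
  have i1: "integrable lborel (\<lambda>t. g (0 + w * t))"
    using lborel_integrable_real_affine[OF gi, of w 0] w by simp
  have wp: "w powr (a - 1) > 0" using w by simp
  have i2: "integrable lborel (\<lambda>t. w powr (a - 1) * (indicator {0<..} t * (exp (- (w * t)) * t powr (a - 1))))"
    using i1 by (simp add: eq)
  show int: "integrable lborel (\<lambda>t. indicator {0<..} t * (exp (- (w * t)) * t powr (a - 1)))"
    using integrable_mult_left_iff[of lborel "w powr (a - 1)"] i2 wp by simp
  have "Gamma a = \<bar>w\<bar> *\<^sub>R integral\<^sup>L lborel (\<lambda>t. g (0 + w * t))"
    using lborel_integral_real_affine[of w g 0] w gI by simp
  also have "\<dots> = w * (w powr (a - 1) * integral\<^sup>L lborel (\<lambda>t. indicator {0<..} t * (exp (- (w * t)) * t powr (a - 1))))"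
    using w by (simp add: eq)
  finally have "Gamma a = w powr a * integral\<^sup>L lborel (\<lambda>t. indicator {0<..} t * (exp (- (w * t)) * t powr (a - 1)))"
    using w by (simp add: powr_diff field_simps)
  thus "integral\<^sup>L lborel (\<lambda>t. indicator {0<..} t * (exp (- (w * t)) * t powr (a - 1))) = Gamma a * w powr (- a)"
    using w by (simp add: powr_minus field_simps)
qed

lemma D_bounds:
  fixes b \<beta> w :: real
  assumes b: "b > 0" and \<beta>0: "\<beta> \<le> 0" and \<beta>1: "b - \<beta> \<le> 2" and w: "w \<ge> 1"
  shows "exp (- w / 2) * w powr (\<beta> - b) / 16 \<le> exp (w / 2) * kummerT \<beta> b (- w)"
        "exp (w / 2) * kummerT \<beta> b (- w) \<le> exp (- w / 2) * w powr (\<beta> - b)"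
proof -
  define a where "a = b - \<beta>"
  have a0: "a > 0" and a2: "a \<le> 2" using b \<beta>0 \<beta>1 by (auto simp: a_def)
  have w0: "w > 0" using w by simp
  define h where "h = (\<lambda>t. indicator {0<..} t * (exp ((- w) * t) * t powr (b - \<beta> - 1) * (1 + t) powr (\<beta> - 1)))"
  define g1 where "g1 = (\<lambda>t::real. indicator {0<..} t * (exp (- (w * t)) * t powr (a - 1)))"
  define g4 where "g4 = (\<lambda>t::real. indicator {0<..} t * (exp (- ((4 * w) * t)) * t powr (a - 1)))"
  have i1: "integrable lborel g1" and I1: "integral\<^sup>L lborel g1 = Gamma a * w powr (- a)"
    using gamma_scaled[OF a0 w0] by (simp_all add: g1_def)
  have i4: "integrable lborel g4" and I4: "integral\<^sup>L lborel g4 = Gamma a * (4 * w) powr (- a)"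
    using gamma_scaled[OF a0, of "4 * w"] w0 by (simp_all add: g4_def)
  have up: "h t \<le> g1 t" for t
  proof (cases "t > 0")
    case True
    have "(1 + t) powr (\<beta> - 1) \<le> (1 + t) powr 0"
      using True \<beta>0 by (intro powr_mono) auto
    hence "(1 + t) powr (\<beta> - 1) \<le> 1" using True by simp
    moreover have "0 \<le> exp ((- w) * t) * t powr (b - \<beta> - 1)" by simp
    ultimately show ?thesis using True
      by (simp add: h_def g1_def a_def)
  qed (simp add: h_def g1_def indicator_def)
  have lo: "g4 t \<le> h t" for t
  proof (cases "t > 0")
    case True
    have l0: "0 \<le> ln (1 + t)" using True by simp
    have l1: "ln (1 + t) \<le> t" using True by (intro ln_add_one_self_le_self) simp
    have "(1 + t) powr (\<beta> - 1) = exp ((\<beta> - 1) * ln (1 + t))"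
      using True by (simp add: powr_def)
    also have "\<dots> \<ge> exp (- 3 * t)"
    proof -
      have "(\<beta> - 1) * ln (1 + t) \<ge> -3 * ln (1 + t)"
        using \<beta>1 b l0 by (intro mult_right_mono) auto
      moreover have "-3 * ln (1 + t) \<ge> -3 * t" using l1 by simp
      ultimately show ?thesis by simp
    qed
    finally have e: "exp (- 3 * t) \<le> (1 + t) powr (\<beta> - 1)" .
    have "exp (- ((4 * w) * t)) \<le> exp ((- w) * t) * exp (- 3 * t)"
    proof -
      have "- ((4 * w) * t) \<le> (- w) * t + (- 3 * t)" using True w by (simp add: algebra_simps)
      thus ?thesis by (simp only: mult_exp_exp exp_le_cancel_iff)
    qed
    also have "\<dots> \<le> exp ((- w) * t) * (1 + t) powr (\<beta> - 1)"
      using e by simp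
    finally have "exp (- ((4 * w) * t)) * t powr (a - 1) \<le> exp ((- w) * t) * (1 + t) powr (\<beta> - 1) * t powr (a - 1)"
      by (intro mult_right_mono) auto
    thus ?thesis using True by (simp add: h_def g4_def a_def algebra_simps)
  qed (simp add: h_def g4_def indicator_def)
  have h0: "0 \<le> h t" for t by (simp add: h_def indicator_def)
  have hm: "h \<in> borel_measurable lborel" unfolding h_def by measurable
  have hi: "integrable lborel h"
    by (rule Bochner_Integration.integrable_bound[OF i1 hm]) (use up h0 in \<open>auto intro!: AE_I2 simp: abs_of_nonneg order_trans[OF _ up]\<close>)
  have "integral\<^sup>L lborel h \<le> Gamma a * w powr (- a)"
    using integral_mono[OF hi i1 up] I1 by simp
  moreover have "Gamma a * (4 * w) powr (- a) \<le> integral\<^sup>L lborel h"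
    using integral_mono[OF i4 hi lo] I4 by simp
  moreover have KT: "kummerT \<beta> b (- w) = exp (- w) / Gamma a * integral\<^sup>L lborel h"
    by (simp add: kummerT_def h_def a_def set_lebesgue_integral_def)
  moreover have Gp: "Gamma a > 0" using a0 by simp
  moreover have ee: "exp (w / 2) * exp (- w) = exp (- w / 2)" by (subst mult_exp_exp) simp
  moreover have pw: "w powr (\<beta> - b) = w powr (- a)" by (simp add: a_def)
  moreover have q: "(4 * w) powr (- a) \<ge> w powr (- a) / 16"
  proof -
    have "(4::real) powr a \<le> 4 powr 2" using a2 by (intro powr_mono) auto
    hence "(4::real) powr a \<le> 16" by simp
    hence "(4::real) powr (- a) \<ge> 1 / 16" by (simp add: powr_minus field_simps)
    thus ?thesis using w0 by (simp add: powr_mult)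
  qed
  ultimately show "exp (- w / 2) * w powr (\<beta> - b) / 16 \<le> exp (w / 2) * kummerT \<beta> b (- w)"
        "exp (w / 2) * kummerT \<beta> b (- w) \<le> exp (- w / 2) * w powr (\<beta> - b)"
  proof -
    have X: "exp (w / 2) * kummerT \<beta> b (- w) = exp (- w / 2) * (integral\<^sup>L lborel h / Gamma a)"
      using KT ee by (simp add: field_simps)
    have U: "integral\<^sup>L lborel h / Gamma a \<le> w powr (- a)"
      using \<open>integral\<^sup>L lborel h \<le> Gamma a * w powr (- a)\<close> Gp by (simp add: divide_le_eq mult.commute)
    have L: "w powr (- a) / 16 \<le> integral\<^sup>L lborel h / Gamma a"
      using \<open>Gamma a * (4 * w) powr (- a) \<le> integral\<^sup>L lborel h\<close> Gp q
    proof -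
      have "w powr (- a) * Gamma a \<le> ((4 * w) powr (- a) * 16) * Gamma a"
        using q Gp by (intro mult_right_mono) auto
      also have "\<dots> = 16 * (Gamma a * (4 * w) powr (- a))" by simp
      also have "\<dots> \<le> 16 * integral\<^sup>L lborel h"
        using \<open>Gamma a * (4 * w) powr (- a) \<le> integral\<^sup>L lborel h\<close> by simp
      finally show ?thesis using Gp by (simp add: le_divide_eq mult.commute)
    qed
    show "exp (- w / 2) * w powr (\<beta> - b) / 16 \<le> exp (w / 2) * kummerT \<beta> b (- w)"
      using mult_left_mono[OF L, of "exp (- w / 2)"] unfolding X pw by simp
    show "exp (w / 2) * kummerT \<beta> b (- w) \<le> exp (- w / 2) * w powr (\<beta> - b)"
      using mult_left_mono[OF U, of "exp (- w / 2)"] unfolding X pw by simp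
  qed
qed

lemma poch_neg_nat:
  assumes "k \<le> m"
  shows "pochhammer (- (of_nat m :: real)) k = (-1) ^ k * fact m / fact (m - k)"
proof -
  have "pochhammer (- (of_nat m :: real)) k = (-1) ^ k * pochhammer (of_nat m - of_nat k + 1) k"
    by (rule pochhammer_minus)
  also have "of_nat m - of_nat k + 1 = (1 :: real) + of_nat (m - k)"
    using assms by (simp add: of_nat_diff)
  also have "pochhammer (1 + of_nat (m - k)) k = (fact m / fact (m - k) :: real)"
  proof -
    have "(fact m :: real) = pochhammer 1 m" by (simp add: pochhammer_fact)
    also have "\<dots> = pochhammer 1 (m - k) * pochhammer (1 + of_nat (m - k)) (m - (m - k))"
      using assms by (intro pochhammer_product) simp
    also have "\<dots> = fact (m - k) * pochhammer (1 + of_nat (m - k)) k"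
      using assms by (simp add: pochhammer_fact)
    finally show ?thesis by (simp add: field_simps)
  qed
  finally show ?thesis by simp
qed

lemma coeff_identity:
  fixes a b w :: real
  assumes b: "b > 0"
  shows "(\<Sum>i\<le>m. (pochhammer a i / pochhammer b i * w ^ i / fact i) * ((- w) ^ (m - i) / fact (m - i)))
         = pochhammer (b - a) m / pochhammer b m * (- w) ^ m / fact m"
proof -
  have V: "(\<Sum>k=0..m. (pochhammer a k * pochhammer (- (of_nat m)) k) / (of_nat (fact k) * pochhammer b k))
           = pochhammer (b - a) m / pochhammer b m"
    using b by (intro Vandermonde_pochhammer) auto
  have trm: "(pochhammer a k / pochhammer b k * w ^ k / fact k) * ((- w) ^ (m - k) / fact (m - k))
      = (pochhammer a k * pochhammer (- (of_nat m)) k) / (of_nat (fact k) * pochhammer b k) * ((- w) ^ m / fact m)"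
    if "k \<in> {0..m}" for k
  proof -
    from that have km: "k \<le> m" by simp
    have pw: "(- w) ^ m = (-1) ^ k * w ^ k * (- w) ^ (m - k)"
    proof -
      have "(- w) ^ m = (- w) ^ k * (- w) ^ (m - k)" using km by (simp flip: power_add)
      thus ?thesis by (simp add: power_minus[of w k])
    qed
    have fm: "(fact m :: real) \<noteq> 0" by simp
    have ss: "(-1::real) ^ k * (-1) ^ k = 1" by (simp flip: power_add)
    define A where "A = pochhammer a k / (pochhammer b k * fact k * fact (m - k))"
    have L: "(pochhammer a k / pochhammer b k * w ^ k / fact k) * ((- w) ^ (m - k) / fact (m - k))
        = A * (w ^ k * (- w) ^ (m - k))" by (simp add: A_def)
    have R: "(pochhammer a k * pochhammer (- (of_nat m)) k) / (of_nat (fact k) * pochhammer b k) * ((- w) ^ m / fact m)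
        = A * (((-1) ^ k * (-1) ^ k) * (w ^ k * (- w) ^ (m - k)))"
      unfolding poch_neg_nat[OF km] pw A_def using fm by (simp add: field_simps)
    show ?thesis unfolding L R ss by simp
  qed
  have "(\<Sum>i\<le>m. (pochhammer a i / pochhammer b i * w ^ i / fact i) * ((- w) ^ (m - i) / fact (m - i)))
      = (\<Sum>k=0..m. (pochhammer a k * pochhammer (- (of_nat m)) k) / (of_nat (fact k) * pochhammer b k) * ((- w) ^ m / fact m))"
    by (simp only: atMost_atLeast0) (rule sum.cong[OF refl trm])
  also have "\<dots> = pochhammer (b - a) m / pochhammer b m * ((- w) ^ m / fact m)"
    by (simp only: sum_distrib_right[symmetric] V)
  finally show ?thesis by simp
qed

lemma exp_sums_real: "(\<lambda>k. w ^ k / fact k) sums exp (w::real)"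
  using exp_converges[of w] by (simp add: divide_inverse mult.commute)

lemma fact_step: "real (Suc k) * (w ^ Suc k / fact (Suc k)) = w * (w ^ k / (fact k :: real))"
proof -
  have f: "(fact (Suc k)::real) = real (Suc k) * fact k" by (simp only: fact_Suc of_nat_mult)
  have x: "real (Suc k) \<noteq> 0" by (simp only: of_nat_eq_0_iff)
  have y: "(fact k :: real) \<noteq> 0" by simp
  have gen: "\<And>x f p. x \<noteq> 0 \<Longrightarrow> f \<noteq> 0 \<Longrightarrow> (x::real) * (w * p / (x * f)) = w * (p / f)"
    by (simp add: field_simps)
  show ?thesis unfolding f power_Suc using gen[OF x y] .
qed

lemma mom1_aux: "(\<lambda>k. real k * (w ^ k / fact k)) sums (w * exp (w::real))"
proof -
  have "(\<lambda>k. w * (w ^ k / fact k)) sums (w * exp w)"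
    by (rule sums_mult[OF exp_sums_real])
  moreover have "(\<lambda>k. real (Suc k) * (w ^ Suc k / fact (Suc k))) = (\<lambda>k. w * (w ^ k / fact k))"
    by (rule ext) (rule fact_step)
  ultimately have "(\<lambda>k. real (Suc k) * (w ^ Suc k / fact (Suc k))) sums (w * exp w)" by simp
  thus ?thesis by (subst (asm) sums_Suc_iff) simp
qed

lemma mom1: "(\<lambda>k. real (k + 1) * (w ^ k / fact k)) sums ((w + 1) * exp (w::real))"
proof -
  have "(\<lambda>k. real k * (w ^ k / fact k) + w ^ k / fact k) sums (w * exp w + exp w)"
    by (rule sums_add[OF mom1_aux exp_sums_real])
  moreover have "(\<lambda>k. real k * (w ^ k / fact k) + w ^ k / fact k) = (\<lambda>k. real (k + 1) * (w ^ k / fact k))"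
    by (rule ext) (simp add: distrib_right add_divide_distrib)
  moreover have "w * exp w + exp w = (w + 1) * exp w" by (simp add: distrib_right)
  ultimately show ?thesis by simp
qed

lemma mom2_aux: "(\<lambda>k. (real k)^2 * (w ^ k / fact k)) sums (w * ((w + 1) * exp (w::real)))"
proof -
  have "(\<lambda>k. w * (real (k + 1) * (w ^ k / fact k))) sums (w * ((w + 1) * exp w))"
    by (rule sums_mult[OF mom1])
  moreover have "(\<lambda>k. (real (Suc k))^2 * (w ^ Suc k / fact (Suc k))) = (\<lambda>k. w * (real (k + 1) * (w ^ k / fact k)))"
  proof (rule ext)
    fix k
    have "(real (Suc k))^2 * (w ^ Suc k / fact (Suc k)) = real (Suc k) * (real (Suc k) * (w ^ Suc k / fact (Suc k)))"
      by (simp only: power2_eq_square mult.assoc)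
    also have "\<dots> = w * (real (k + 1) * (w ^ k / fact k))" by (simp only: fact_step) simp
    finally show "(real (Suc k))^2 * (w ^ Suc k / fact (Suc k)) = w * (real (k + 1) * (w ^ k / fact k))" .
  qed
  ultimately have "(\<lambda>k. (real (Suc k))^2 * (w ^ Suc k / fact (Suc k))) sums (w * ((w + 1) * exp w))" by simp
  thus ?thesis by (subst (asm) sums_Suc_iff) simp
qed

lemma mom2: "(\<lambda>k. (real (k + 1))^2 * (w ^ k / fact k)) sums ((w^2 + 3 * w + 1) * exp (w::real))"
proof -
  have "(\<lambda>k. (real k)^2 * (w ^ k / fact k) + 2 * (real k * (w ^ k / fact k)) + w ^ k / fact k)
      sums (w * ((w + 1) * exp w) + 2 * (w * exp w) + exp w)"
    by (intro sums_add sums_mult mom2_aux mom1_aux exp_sums_real)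
  moreover have "(\<lambda>k. (real k)^2 * (w ^ k / fact k) + 2 * (real k * (w ^ k / fact k)) + w ^ k / fact k)
     = (\<lambda>k. (real (k + 1))^2 * (w ^ k / fact k))"
    by (rule ext) (simp add: power2_eq_square algebra_simps)
  moreover have "w * ((w + 1) * exp w) + 2 * (w * exp w) + exp w = (w^2 + 3 * w + 1) * exp w"
    by (simp add: power2_eq_square algebra_simps)
  ultimately show ?thesis by simp
qed

lemma kummer_transform:
  fixes a b w :: real
  assumes b: "b > 0" and sA: "summable (\<lambda>k. norm (pochhammer a k / pochhammer b k * w ^ k / fact k))"
  shows "kummerM (b - a) b (- w) = exp (- w) * (\<Sum>k. pochhammer a k / pochhammer b k * w ^ k / fact k)"
proof -
  have sB: "summable (\<lambda>k. norm ((- w) ^ k / fact k))"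
    using exp_sums_real[of "\<bar>w\<bar>"] by (simp add: sums_iff abs_mult power_abs)
  have eB: "(\<Sum>k. (- w) ^ k / fact k) = exp (- w)"
    using exp_sums_real[of "- w"] by (simp add: sums_iff)
  have "(\<lambda>m. \<Sum>i\<le>m. (pochhammer a i / pochhammer b i * w ^ i / fact i) * ((- w) ^ (m - i) / fact (m - i)))
      sums ((\<Sum>k. pochhammer a k / pochhammer b k * w ^ k / fact k) * (\<Sum>k. (- w) ^ k / fact k))"
    by (rule Cauchy_product_sums[OF sA sB])
  hence "(\<lambda>m. pochhammer (b - a) m / pochhammer b m * (- w) ^ m / fact m)
      sums ((\<Sum>k. pochhammer a k / pochhammer b k * w ^ k / fact k) * exp (- w))"
    by (simp only: coeff_identity[OF b] eB)
  thus ?thesis unfolding kummerM_def by (simp add: sums_iff mult.commute)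
qed

lemma r_Suc:
  fixes b c :: real assumes b: "b > 0" and c: "c \<ge> 0"
  shows "pochhammer (b + c) (Suc k) / pochhammer b (Suc k) = pochhammer (b + c) k / pochhammer b k * (1 + c / (b + real k))"
proof -
  have "b + real k > 0" using b by simp
  thus ?thesis by (simp add: pochhammer_Suc field_simps)
qed

lemma r_upper_aux:
  fixes b c :: real assumes b: "b > 0" and c: "c \<ge> 0"
  shows "pochhammer (b + c) (Suc k) / pochhammer b (Suc k) \<le> exp (c * (1 / b + ln (b + real k) - ln b))"
proof (induction k)
  case 0
  have "1 + c / b \<le> exp (c / b)" by (rule exp_ge_add_one_self)
  thus ?case using b by (simp add: r_Suc[OF b c, of 0] field_simps)
next
  case (Suc k)
  have bk: "b + real k > 0" using b by simp
  have l: "1 / (b + real (Suc k)) \<le> ln (b + real (Suc k)) - ln (b + real k)"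
  proof -
    have "ln ((b + real k) / (b + real (Suc k))) \<le> (b + real k) / (b + real (Suc k)) - 1"
      using bk by (intro ln_le_minus_one) simp
    also have "\<dots> = - (1 / (b + real (Suc k)))" using bk by (simp add: field_simps)
    finally show ?thesis using bk by (simp add: ln_div)
  qed
  have r0: "0 \<le> pochhammer (b + c) (Suc k) / pochhammer b (Suc k)"
    using b c by (intro divide_nonneg_nonneg pochhammer_nonneg) auto
  have "pochhammer (b + c) (Suc (Suc k)) / pochhammer b (Suc (Suc k))
      = pochhammer (b + c) (Suc k) / pochhammer b (Suc k) * (1 + c / (b + real (Suc k)))"
    by (rule r_Suc[OF b c])
  also have "\<dots> \<le> exp (c * (1 / b + ln (b + real k) - ln b)) * exp (c / (b + real (Suc k)))"
  proof (rule mult_mono[OF Suc.IH])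
    show "1 + c / (b + real (Suc k)) \<le> exp (c / (b + real (Suc k)))" by (rule exp_ge_add_one_self)
  qed (use r0 b c in auto)
  also have "\<dots> = exp (c * (1 / b + ln (b + real k) - ln b) + c * (1 / (b + real (Suc k))))"
    by (simp add: mult_exp_exp)
  also have "\<dots> \<le> exp (c * (1 / b + ln (b + real (Suc k)) - ln b))"
  proof -
    have "c * (1 / (b + real (Suc k))) \<le> c * (ln (b + real (Suc k)) - ln (b + real k))"
      using l c by (rule mult_left_mono)
    thus ?thesis by (simp add: algebra_simps)
  qed
  finally show ?case .
qed

lemma r_upper:
  fixes b c :: real assumes b1: "b \<ge> 1/2" and b2: "b \<le> 1" and c: "c \<ge> 0" and c2: "c \<le> 2"
  shows "pochhammer (b + c) k / pochhammer b k \<le> 4 * exp 4 * real (k + 1) powr c"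
proof (cases k)
  case 0
  have "1 \<le> exp (4::real)" by simp
  hence "1 \<le> 4 * exp (4::real)" by linarith
  thus ?thesis using 0 by simp
next
  case (Suc m)
  have b: "b > 0" using b1 by simp
  have bm: "b + real m > 0" using b by simp
  have "pochhammer (b + c) k / pochhammer b k \<le> exp (c * (1 / b + ln (b + real m) - ln b))"
    using r_upper_aux[OF b c, of m] Suc by simp
  also have "\<dots> = exp (c / b) * ((b + real m) / b) powr c"
    using b bm by (simp add: powr_def ln_div mult_exp_exp algebra_simps)
  also have "\<dots> \<le> exp 4 * (2 * real (k + 1)) powr c"
  proof (rule mult_mono)
    have "c / b \<le> 4" using b1 c c2 by (simp add: divide_le_eq) 
    thus "exp (c / b) \<le> exp 4" by simp
    have mm: "real m * 1 \<le> real m * (2 * b)" using b1 by (intro mult_left_mono) auto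
    have "(b + real m) \<le> 2 * real (k + 1) * b" using b1 b2 Suc mm by (simp add: algebra_simps)
    hence "(b + real m) / b \<le> 2 * real (k + 1)" using b by (simp add: divide_le_eq)
    thus "((b + real m) / b) powr c \<le> (2 * real (k + 1)) powr c"
      using b bm c by (intro powr_mono2) auto
  qed auto
  also have "\<dots> = exp 4 * (2 powr c * real (k + 1) powr c)"
    by (subst powr_mult) auto
  also have "\<dots> \<le> exp 4 * (4 * real (k + 1) powr c)"
  proof -
    have "(2::real) powr c \<le> 2 powr 2" using c2 by (intro powr_mono) auto
    hence "(2::real) powr c \<le> 4" by simp
    thus ?thesis by (intro mult_left_mono mult_right_mono) auto
  qed
  finally show ?thesis by simp
qed

lemma r_lower_aux:
  fixes b c :: real assumes b: "b > 0" and c: "c \<ge> 0" and c2: "c \<le> 2"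
  shows "((b + real k) * (b + real k + 1) / (b * (b + 1))) powr (c / 2) \<le> pochhammer (b + c) k / pochhammer b k"
proof (induction k)
  case 0
  thus ?case using b by simp
next
  case (Suc k)
  have bk: "b + real k > 0" using b by simp
  define s where "s = (b + real k) * (b + real k + 1) / (b * (b + 1))"
  have s0: "s > 0" using b bk by (simp add: s_def)
  have snext: "(b + real (Suc k)) * (b + real (Suc k) + 1) / (b * (b + 1)) = s * (1 + 2 / (b + real k))"
  proof -
    have e: "1 + 2 / (b + real k) = (b + real k + 2) / (b + real k)" using bk by (simp add: field_simps)
    have bb: "b * (b + 1) > 0" using b by simp
    show ?thesis unfolding e s_def using bk bb
      by (simp add: divide_simps) (simp add: algebra_simps)
  qed
  have Y: "(1 + 2 / (b + real k)) powr (c / 2) \<le> 1 + c / (b + real k)"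
  proof -
    have "(1 + 2 / (b + real k)) powr (c / 2) * 1 powr (1 - c / 2) \<le> (c / 2) * (1 + 2 / (b + real k)) + (1 - c / 2) * 1"
    proof (rule Youngs_inequality_0)
      show "0 < 1 + 2 / (b + real k)" using bk by (simp add: add_pos_pos)
    qed (use c c2 in auto)
    thus ?thesis using bk by (simp add: field_simps)
  qed
  have "((b + real (Suc k)) * (b + real (Suc k) + 1) / (b * (b + 1))) powr (c / 2)
      = s powr (c / 2) * (1 + 2 / (b + real k)) powr (c / 2)"
    unfolding snext using s0 bk by (simp add: powr_mult)
  also have "\<dots> \<le> pochhammer (b + c) k / pochhammer b k * (1 + c / (b + real k))"
  proof (rule mult_mono)
    show "0 \<le> pochhammer (b + c) k / pochhammer b k"
      using b c by (intro divide_nonneg_nonneg pochhammer_nonneg) auto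
  qed (use Suc.IH Y in \<open>auto simp: s_def\<close>)
  also have "\<dots> = pochhammer (b + c) (Suc k) / pochhammer b (Suc k)"
    by (rule r_Suc[OF b c, symmetric])
  finally show ?case .
qed

lemma r_lower:
  fixes b c :: real assumes b1: "b \<ge> 1/2" and b2: "b \<le> 1" and c: "c \<ge> 0" and c2: "c \<le> 2"
  shows "real (k + 1) powr c / 4 \<le> pochhammer (b + c) k / pochhammer b k"
proof -
  have b: "b > 0" using b1 by simp
  have "(real (k + 1))^2 / 4 \<le> (b + real k) * (b + real k + 1) / (b * (b + 1))"
  proof -
    have h1: "real (k + 1) / 2 \<le> b + real k" using b1 by simp
    have h2: "real (k + 1) \<le> b + real k + 1" using b by simp
    have "real (k + 1) / 2 * real (k + 1) \<le> (b + real k) * (b + real k + 1)"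
      using h1 h2 by (intro mult_mono) auto
    hence P: "(real (k + 1))^2 / 4 \<le> (b + real k) * (b + real k + 1) / 2"
      by (simp add: power2_eq_square)
    have bb: "b * (b + 1) \<le> 1 * 2" using b b2 by (intro mult_mono) auto
    have bb0: "0 < b * (b + 1)" using b by simp
    have "(b + real k) * (b + real k + 1) / 2 \<le> (b + real k) * (b + real k + 1) / (b * (b + 1))"
      using bb bb0 b by (intro divide_left_mono) auto
    with P show ?thesis by linarith
  qed
  hence "((real (k + 1))^2 / 4) powr (c / 2) \<le> ((b + real k) * (b + real k + 1) / (b * (b + 1))) powr (c / 2)"
    using c by (intro powr_mono2) auto
  also have "\<dots> \<le> pochhammer (b + c) k / pochhammer b k" by (rule r_lower_aux[OF b c c2])
  also have "((real (k + 1))^2 / 4) powr (c / 2) = real (k + 1) powr c / 2 powr c"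
  proof -
    have "((real (k + 1))^2 / 4) powr (c / 2) = ((real (k + 1) / 2) powr 2) powr (c / 2)"
      by (simp add: power2_eq_square powr_numeral[symmetric])
    also have "\<dots> = (real (k + 1) / 2) powr c" by (subst powr_powr) simp
    finally show ?thesis by (simp add: powr_divide)
  qed
  moreover have "real (k + 1) powr c / 4 \<le> real (k + 1) powr c / 2 powr c"
  proof -
    have "(2::real) powr c \<le> 2 powr 2" using c2 by (intro powr_mono) auto
    hence "(2::real) powr c \<le> 4" by simp
    thus ?thesis by (intro divide_left_mono) auto
  qed
  ultimately show ?thesis by linarith
qed

lemma t_pow_bounds:
  fixes t c :: real assumes t: "t \<ge> 0" and c: "c \<ge> 0" and c2: "c \<le> 2"
  shows "t powr c \<le> 1 + t^2" "t - 1/4 - (t - 1)^2 \<le> t powr c"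
proof -
  have q1: "t - 1/4 - (t - 1)^2 \<le> 1"
  proof -
    have "0 \<le> (t - 3/2)^2" by simp
    thus ?thesis by (simp add: power2_eq_square algebra_simps)
  qed
  have q2: "t - 1/4 - (t - 1)^2 \<le> t^2"
  proof -
    have "0 \<le> 2 * (t - 3/4)^2 + 1/8" by simp
    thus ?thesis by (simp add: power2_eq_square algebra_simps)
  qed
  have "t powr c \<le> 1 + t^2 \<and> t - 1/4 - (t - 1)^2 \<le> t powr c"
  proof (cases "t \<le> 1")
    case True
    have "t powr c \<le> t powr 0" using True t c by (intro powr_mono') auto
    moreover have "t powr 2 \<le> t powr c" using True t c2 by (intro powr_mono') auto
    ultimately have "t powr c \<le> 1" "t^2 \<le> t powr c"
      using t by (auto simp: powr_numeral split: if_splits) 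
    moreover have "0 \<le> t^2" by simp
    ultimately show ?thesis using q2 by linarith
  next
    case False
    have "t powr c \<le> t powr 2" using False c2 by (intro powr_mono) auto
    moreover have "t powr 0 \<le> t powr c" using False c by (intro powr_mono) auto
    ultimately have "t powr c \<le> t^2" "1 \<le> t powr c"
      using False by (auto simp: powr_numeral)
    thus ?thesis using q1 by simp
  qed
  thus "t powr c \<le> 1 + t^2" "t - 1/4 - (t - 1)^2 \<le> t powr c" by auto
qed

lemma P_bounds:
  fixes b c w :: real
  assumes b1: "b \<ge> 1/2" and b2: "b \<le> 1" and c: "c \<ge> 0" and c2: "c \<le> 2" and w: "w \<ge> 0"
  shows "summable (\<lambda>k. norm (pochhammer (b + c) k / pochhammer b k * w ^ k / fact k))"
        "(w + 1) powr c * exp w / 8 \<le> (\<Sum>k. pochhammer (b + c) k / pochhammer b k * w ^ k / fact k)"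
        "(\<Sum>k. pochhammer (b + c) k / pochhammer b k * w ^ k / fact k) \<le> 12 * exp 4 * (w + 1) powr c * exp w"
proof -
  define f where "f = (\<lambda>k. pochhammer (b + c) k / pochhammer b k * w ^ k / fact k)"
  define r where "r = (\<lambda>k. pochhammer (b + c) k / pochhammer b k)"
  define e where "e = (\<lambda>k. w ^ k / (fact k :: real))"
  define W where "W = w + 1"
  define Wc where "Wc = W powr c"
  have b: "b > 0" using b1 by simp
  have fe: "(\<lambda>k. pochhammer (b + c) k / pochhammer b k * w ^ k / fact k) = f" by (simp add: f_def)
  have W0: "W > 0" using w by (simp add: W_def)
  have Wc0: "Wc > 0" using W0 by (simp add: Wc_def)
  have fre: "f k = r k * e k" for k by (simp add: f_def r_def e_def)
  have e0: "e k \<ge> 0" for k using w by (simp add: e_def)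
  have r0: "r k \<ge> 0" for k using b c unfolding r_def by (intro divide_nonneg_nonneg pochhammer_nonneg) auto
  have f0: "f k \<ge> 0" for k using e0 r0 fre by simp
  have S0: "e sums exp w" unfolding e_def by (rule exp_sums_real)
  have S1: "(\<lambda>k. real (k + 1) * e k) sums (W * exp w)" unfolding e_def W_def by (rule mom1)
  have S2: "(\<lambda>k. (real (k + 1))^2 * e k) sums ((w^2 + 3 * w + 1) * exp w)" unfolding e_def by (rule mom2)
  define t where "t = (\<lambda>k. real (k + 1) / W)"
  have t0: "t k \<ge> 0" for k using W0 by (simp add: t_def)
  have kc: "real (k + 1) powr c = Wc * t k powr c" for k
  proof -
    have "real (k + 1) = W * t k" using W0 by (simp add: t_def)
    hence "real (k + 1) powr c = (W * t k) powr c" by simp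
    also have "\<dots> = W powr c * t k powr c" using W0 t0 by (simp add: powr_mult)
    finally show ?thesis by (simp add: Wc_def)
  qed
  define U where "U = (\<lambda>k. 4 * exp 4 * Wc * (e k + (1 / W^2) * ((real (k + 1))^2 * e k)))"
  have fU: "f k \<le> U k" for k
  proof -
    have "f k \<le> (4 * exp 4 * real (k + 1) powr c) * e k"
      unfolding fre r_def using r_upper[OF b1 b2 c c2, of k] e0 by (intro mult_right_mono) auto
    also have "\<dots> = 4 * exp 4 * Wc * (t k powr c * e k)" using kc[of k] by (simp add: algebra_simps)
    also have "\<dots> \<le> 4 * exp 4 * Wc * ((1 + (t k)^2) * e k)"
      using t_pow_bounds(1)[OF t0 c c2, of k] e0 Wc0
      by (intro mult_left_mono mult_right_mono) auto
    also have "\<dots> = U k" using W0 by (simp add: U_def t_def power_divide field_simps)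
    finally show ?thesis .
  qed
  have SU: "U sums (4 * exp 4 * Wc * (exp w + (1 / W^2) * ((w^2 + 3 * w + 1) * exp w)))"
    unfolding U_def by (intro sums_mult sums_add S0 S2)
  have sfn: "summable (\<lambda>k. norm (f k))"
    by (rule summable_comparison_test'[OF sums_summable[OF SU], of 0]) (use f0 fU in auto)
  show sf: "summable (\<lambda>k. norm (pochhammer (b + c) k / pochhammer b k * w ^ k / fact k))"
    using sfn by (simp add: f_def)
  have sf': "summable f" using sfn by (rule summable_norm_cancel)
  have Q: "(w^2 + 3 * w + 1) \<le> 2 * W^2" and Q': "(w^2 + 3 * w + 1) \<le> 5/4 * W^2"
  proof -
    have "0 \<le> (w - 1)^2" by simp
    moreover have "5/4 * W^2 = (w^2 + 3*w + 1) + (w-1)^2/4" by (simp add: W_def power2_eq_square field_simps)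
    ultimately show "(w^2 + 3 * w + 1) \<le> 5/4 * W^2" by simp
    moreover have "0 \<le> W^2" by simp
    ultimately show "(w^2 + 3 * w + 1) \<le> 2 * W^2" by linarith
  qed
  have "suminf f \<le> 4 * exp 4 * Wc * (exp w + (1 / W^2) * ((w^2 + 3 * w + 1) * exp w))"
    by (rule sums_le[OF fU summable_sums[OF sf'] SU])
  also have "\<dots> \<le> 4 * exp 4 * Wc * (3 * exp w)"
  proof -
    have "(1 / W^2) * ((w^2 + 3 * w + 1) * exp w) = ((w^2 + 3 * w + 1) / W^2) * exp w" by simp
    also have "\<dots> \<le> 2 * exp w"
      using Q W0 by (intro mult_right_mono) (auto simp: divide_le_eq)
    finally show ?thesis using Wc0 by (intro mult_left_mono) auto
  qed
  finally show "(\<Sum>k. pochhammer (b + c) k / pochhammer b k * w ^ k / fact k) \<le> 12 * exp 4 * (w + 1) powr c * exp w"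
    unfolding fe by (simp add: Wc_def W_def mult.assoc)
  define L where "L = (\<lambda>k. (1/4) * Wc * ((3 / W) * (real (k + 1) * e k) - (5/4) * e k - (1 / W^2) * ((real (k + 1))^2 * e k)))"
  have Lf: "L k \<le> f k" for k
  proof -
    have "L k = (1/4) * Wc * ((t k - 1/4 - (t k - 1)^2) * e k)"
      using W0 by (simp add: L_def t_def power2_eq_square field_simps)
    also have "\<dots> \<le> (1/4) * Wc * (t k powr c * e k)"
      using t_pow_bounds(2)[OF t0 c c2, of k] e0 Wc0
      by (intro mult_left_mono mult_right_mono) auto
    also have "\<dots> = (real (k + 1) powr c / 4) * e k" using kc[of k] by (simp add: algebra_simps)
    also have "\<dots> \<le> f k"
      unfolding fre r_def using r_lower[OF b1 b2 c c2, of k] e0 by (intro mult_right_mono) auto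
    finally show ?thesis .
  qed
  have SL: "L sums ((1/4) * Wc * ((3 / W) * (W * exp w) - (5/4) * exp w - (1 / W^2) * ((w^2 + 3 * w + 1) * exp w)))"
    unfolding L_def by (intro sums_mult sums_diff S0 S1 S2)
  have "Wc * exp w / 8 \<le> (1/4) * Wc * ((3 / W) * (W * exp w) - (5/4) * exp w - (1 / W^2) * ((w^2 + 3 * w + 1) * exp w))"
  proof -
    have "(1 / W^2) * ((w^2 + 3 * w + 1) * exp w) = ((w^2 + 3 * w + 1) / W^2) * exp w" by simp
    also have "\<dots> \<le> 5/4 * exp w"
      using Q' W0 by (intro mult_right_mono) (auto simp: divide_le_eq)
    finally have A: "(1 / W^2) * ((w^2 + 3 * w + 1) * exp w) \<le> 5/4 * exp w" .
    have B: "(3 / W) * (W * exp w) = 3 * exp w" using W0 by simp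
    have "exp w / 2 \<le> (3 / W) * (W * exp w) - (5/4) * exp w - (1 / W^2) * ((w^2 + 3 * w + 1) * exp w)"
      using A B by simp
    hence "(1/4) * Wc * (exp w / 2) \<le> (1/4) * Wc * ((3 / W) * (W * exp w) - (5/4) * exp w - (1 / W^2) * ((w^2 + 3 * w + 1) * exp w))"
      using Wc0 by (intro mult_left_mono) auto
    thus ?thesis by simp
  qed
  also have "\<dots> \<le> suminf f"
    by (rule sums_le[OF Lf SL summable_sums[OF sf']])
  finally show "(w + 1) powr c * exp w / 8 \<le> (\<Sum>k. pochhammer (b + c) k / pochhammer b k * w ^ k / fact k)"
    unfolding fe by (simp add: Wc_def W_def mult.assoc)
qed

lemma main_bounds:
  fixes al be w :: real
  assumes al1: "al \<ge> 1/2" and al2: "al \<le> 1" and be0: "be \<le> 0" and be1: "al - be - 1 \<le> 1" and w: "w \<ge> 1"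
  shows "exp (- w / 2) * w powr (be - al) / (64 * exp 4) \<le> exp (w / 2) * kummerT be al (- w) \<and>
         exp (w / 2) * kummerT be al (- w) \<le> (64 * exp 4) * exp (- w / 2) * w powr (be - al) \<and>
         exp (w / 2) * w powr (- be) / (64 * exp 4) \<le> exp (w / 2) * kummerM be al (- w) \<and>
         exp (w / 2) * kummerM be al (- w) \<le> (64 * exp 4) * exp (w / 2) * w powr (- be)"
proof -
  define C :: real where "C = 64 * exp 4"
  have e4: "1 \<le> exp (4::real)" by simp
  have C16: "16 \<le> C" and C1: "1 \<le> C" using e4 unfolding C_def by linarith+
  have al0: "al > 0" using al1 by simp
  have D: "exp (- w / 2) * w powr (be - al) / 16 \<le> exp (w / 2) * kummerT be al (- w)"
          "exp (w / 2) * kummerT be al (- w) \<le> exp (- w / 2) * w powr (be - al)"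
    using D_bounds[OF al0 be0 _ w] be1 by auto
  have X0: "0 \<le> exp (- w / 2) * w powr (be - al)" by simp
  have D1: "exp (- w / 2) * w powr (be - al) / C \<le> exp (w / 2) * kummerT be al (- w)"
  proof -
    have "exp (- w / 2) * w powr (be - al) / C \<le> exp (- w / 2) * w powr (be - al) / 16"
      using C16 X0 by (intro divide_left_mono) auto
    thus ?thesis using D(1) by linarith
  qed
  have D2: "exp (w / 2) * kummerT be al (- w) \<le> C * exp (- w / 2) * w powr (be - al)"
  proof -
    have "exp (- w / 2) * w powr (be - al) \<le> C * (exp (- w / 2) * w powr (be - al))"
      using mult_right_mono[OF C1 X0] by simp
    hence "exp (w / 2) * kummerT be al (- w) \<le> C * (exp (- w / 2) * w powr (be - al))"
      using D(2) by linarith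
    thus ?thesis by (simp only: mult.assoc)
  qed
  define c where "c = - be"
  have c0: "c \<ge> 0" and c2: "c \<le> 2" using be0 be1 al1 by (auto simp: c_def)
  have w0: "w \<ge> 0" using w by simp
  define P where "P = (\<Sum>k. pochhammer (al + c) k / pochhammer al k * w ^ k / fact k)"
  have sA: "summable (\<lambda>k. norm (pochhammer (al + c) k / pochhammer al k * w ^ k / fact k))"
    by (rule P_bounds(1)[OF al1 al2 c0 c2 w0])
  have Pl: "(w + 1) powr c * exp w / 8 \<le> P"
    unfolding P_def by (rule P_bounds(2)[OF al1 al2 c0 c2 w0])
  have Pu: "P \<le> 12 * exp 4 * (w + 1) powr c * exp w"
    unfolding P_def by (rule P_bounds(3)[OF al1 al2 c0 c2 w0])
  have KM: "kummerM be al (- w) = exp (- w) * P"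
    using kummer_transform[OF al0 sA] by (simp add: P_def c_def)
  have ee: "exp (w / 2) * exp (- w) = exp (- w / 2)" by (subst mult_exp_exp) simp
  have ee2: "exp (- w / 2) * exp w = exp (w / 2)" by (subst mult_exp_exp) simp
  have G: "exp (w / 2) * kummerM be al (- w) = exp (- w / 2) * P"
    unfolding KM using ee by (simp add: mult.assoc[symmetric])
  have wc: "w powr (- be) = w powr c" by (simp add: c_def)
  have wp1: "w powr c \<le> (w + 1) powr c" using w c0 by (intro powr_mono2) auto
  have wp2: "(w + 1) powr c \<le> 4 * w powr c"
  proof -
    have "(w + 1) powr c \<le> (2 * w) powr c" using w c0 by (intro powr_mono2) auto
    also have "\<dots> = 2 powr c * w powr c" using w by (subst powr_mult) auto
    also have "\<dots> \<le> 4 * w powr c"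
    proof -
      have "(2::real) powr c \<le> 2 powr 2" using c2 by (intro powr_mono) auto
      thus ?thesis by (intro mult_right_mono) auto
    qed
    finally show ?thesis .
  qed
  have G1: "exp (w / 2) * w powr (- be) / C \<le> exp (w / 2) * kummerM be al (- w)"
  proof -
    have "exp (w / 2) * w powr (- be) / C \<le> exp (w / 2) * w powr c / 8"
      unfolding wc using C16 by (intro divide_left_mono) auto
    also have "\<dots> \<le> exp (w / 2) * (w + 1) powr c / 8"
      using wp1 by (intro divide_right_mono mult_left_mono) auto
    also have "\<dots> = exp (- w / 2) * ((w + 1) powr c * exp w / 8)"
      by (simp only: ee2[symmetric] times_divide_eq_right mult_ac)
    also have "\<dots> \<le> exp (- w / 2) * P"
      using Pl by (intro mult_left_mono) auto
    finally show ?thesis unfolding G .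
  qed
  have G2: "exp (w / 2) * kummerM be al (- w) \<le> C * exp (w / 2) * w powr (- be)"
  proof -
    have "exp (w / 2) * kummerM be al (- w) \<le> exp (- w / 2) * (12 * exp 4 * (w + 1) powr c * exp w)"
      unfolding G using Pu by (intro mult_left_mono) auto
    also have "\<dots> = 12 * exp 4 * exp (w / 2) * (w + 1) powr c"
      by (simp only: ee2[symmetric] mult_ac)
    also have "\<dots> \<le> 12 * exp 4 * exp (w / 2) * (4 * w powr c)"
      using wp2 by (intro mult_left_mono) auto
    also have "\<dots> \<le> C * exp (w / 2) * w powr (- be)"
    proof -
      have n: "0 \<le> exp 4 * exp (w / 2) * w powr c" by simp
      have "12 * exp 4 * exp (w / 2) * (4 * w powr c) = 48 * (exp 4 * exp (w / 2) * w powr c)" by simp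
      moreover have "C * exp (w / 2) * w powr (- be) = 64 * (exp 4 * exp (w / 2) * w powr c)"
        unfolding wc C_def by simp
      ultimately show ?thesis using n by linarith
    qed
    finally show ?thesis .
  qed
  show ?thesis using D1 D2 G1 G2 by (simp add: C_def)
qed

theorem corollary4p10:
  fixes n :: nat
  assumes "n \<ge> 2"
  shows "\<exists>C>0. \<forall>(j::nat) (lam::real) (z::real).
    let \<alpha> = 1 - 1 / real n;
        \<beta> = (1 - 1 / real n) / 2 - lam / (real j * real n);
        w = real j * z ^ n;
        G = exp (w / 2) * kummerM \<beta> \<alpha> (- w);
        D = exp (w / 2) * kummerT \<beta> \<alpha> (- w)
    in (j \<ge> 1 \<and> lam \<ge> real (n - 1) * real j / 2 \<and> \<alpha> - \<beta> - 1 \<le> 1 \<and> z \<ge> 1) \<longrightarrow>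
       (exp (- w / 2) * w powr (\<beta> - \<alpha>) / C \<le> D \<and>
        D \<le> C * exp (- w / 2) * w powr (\<beta> - \<alpha>) \<and>
        exp (w / 2) * w powr (- \<beta>) / C \<le> G \<and>
        G \<le> C * exp (w / 2) * w powr (- \<beta>))"
  unfolding Let_def
proof (rule exI[of _ "64 * exp 4"], rule conjI)
  show "(0::real) < 64 * exp 4" by simp
next
  have n2: "real n \<ge> 2" using assms by simp
  show "\<forall>(j::nat) (lam::real) (z::real).
    (j \<ge> 1 \<and> lam \<ge> real (n - 1) * real j / 2 \<and> 1 - 1 / real n - ((1 - 1 / real n) / 2 - lam / (real j * real n)) - 1 \<le> 1 \<and> z \<ge> 1) \<longrightarrow>
       (exp (- (real j * z ^ n) / 2) * (real j * z ^ n) powr (((1 - 1 / real n) / 2 - lam / (real j * real n)) - (1 - 1 / real n)) / (64 * exp 4) \<le> exp ((real j * z ^ n) / 2) * kummerT ((1 - 1 / real n) / 2 - lam / (real j * real n)) (1 - 1 / real n) (- (real j * z ^ n)) \<and>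
        exp ((real j * z ^ n) / 2) * kummerT ((1 - 1 / real n) / 2 - lam / (real j * real n)) (1 - 1 / real n) (- (real j * z ^ n)) \<le> (64 * exp 4) * exp (- (real j * z ^ n) / 2) * (real j * z ^ n) powr (((1 - 1 / real n) / 2 - lam / (real j * real n)) - (1 - 1 / real n)) \<and>
        exp ((real j * z ^ n) / 2) * (real j * z ^ n) powr (- ((1 - 1 / real n) / 2 - lam / (real j * real n))) / (64 * exp 4) \<le> exp ((real j * z ^ n) / 2) * kummerM ((1 - 1 / real n) / 2 - lam / (real j * real n)) (1 - 1 / real n) (- (real j * z ^ n)) \<and>
        exp ((real j * z ^ n) / 2) * kummerM ((1 - 1 / real n) / 2 - lam / (real j * real n)) (1 - 1 / real n) (- (real j * z ^ n)) \<le> (64 * exp 4) * exp ((real j * z ^ n) / 2) * (real j * z ^ n) powr (- ((1 - 1 / real n) / 2 - lam / (real j * real n))))"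
  proof (intro allI impI)
    fix j :: nat and lam z :: real
    assume H: "j \<ge> 1 \<and> lam \<ge> real (n - 1) * real j / 2 \<and> 1 - 1 / real n - ((1 - 1 / real n) / 2 - lam / (real j * real n)) - 1 \<le> 1 \<and> z \<ge> 1"
    have j1: "real j \<ge> 1" using H by simp
    have z1: "z \<ge> 1" using H by simp
    have lam: "lam \<ge> (real n - 1) * real j / 2" using H assms by (simp add: of_nat_diff)
    have a1: "1 / 2 \<le> 1 - 1 / real n" using n2 by (simp add: field_simps)
    have a2: "1 - 1 / real n \<le> 1" using n2 by simp
    have b0: "(1 - 1 / real n) / 2 - lam / (real j * real n) \<le> 0"
    proof -
      have jn: "real j * real n > 0" using j1 n2 by simp
      have "(1 - 1 / real n) / 2 = ((real n - 1) * real j / 2) / (real j * real n)"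
        using j1 n2 by (simp add: field_simps)
      also have "\<dots> \<le> lam / (real j * real n)"
        using lam jn by (intro divide_right_mono) auto
      finally show ?thesis by simp
    qed
    have b1: "1 - 1 / real n - ((1 - 1 / real n) / 2 - lam / (real j * real n)) - 1 \<le> 1" using H by simp
    have w1: "1 \<le> real j * z ^ n"
    proof -
      have "1 \<le> z ^ n" using z1 by (rule one_le_power)
      thus ?thesis using j1 by (metis mult_mono mult_1 zero_le_one order_trans)
    qed
    show "exp (- (real j * z ^ n) / 2) * (real j * z ^ n) powr (((1 - 1 / real n) / 2 - lam / (real j * real n)) - (1 - 1 / real n)) / (64 * exp 4) \<le> exp ((real j * z ^ n) / 2) * kummerT ((1 - 1 / real n) / 2 - lam / (real j * real n)) (1 - 1 / real n) (- (real j * z ^ n)) \<and>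
        exp ((real j * z ^ n) / 2) * kummerT ((1 - 1 / real n) / 2 - lam / (real j * real n)) (1 - 1 / real n) (- (real j * z ^ n)) \<le> (64 * exp 4) * exp (- (real j * z ^ n) / 2) * (real j * z ^ n) powr (((1 - 1 / real n) / 2 - lam / (real j * real n)) - (1 - 1 / real n)) \<and>
        exp ((real j * z ^ n) / 2) * (real j * z ^ n) powr (- ((1 - 1 / real n) / 2 - lam / (real j * real n))) / (64 * exp 4) \<le> exp ((real j * z ^ n) / 2) * kummerM ((1 - 1 / real n) / 2 - lam / (real j * real n)) (1 - 1 / real n) (- (real j * z ^ n)) \<and>
        exp ((real j * z ^ n) / 2) * kummerM ((1 - 1 / real n) / 2 - lam / (real j * real n)) (1 - 1 / real n) (- (real j * z ^ n)) \<le> (64 * exp 4) * exp ((real j * z ^ n) / 2) * (real j * z ^ n) powr (- ((1 - 1 / real n) / 2 - lam / (real j * real n)))"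
      by (rule main_bounds[OF a1 a2 b0 b1 w1])
  qed
qed

end
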